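(* If $G$ is a bridgeless cubic graph, then $\omega'(G)\leq \frac{2}{3}\mu'_3(G)$.
   Context: A join of a graph $H$ is a set $J\subseteq E(H)$ such that every vertex has degree of the same parity in $H$ and in the spanning subgraph $(V(H),J)$. In a cubic graph every vertex has degree $1$ or $3$ in a join $J$; a vertex of degree $3$ in $J$ is a $J$-vertex and $n(J)$ is the number of $J$-vertices. The weak oddness $\omega'(G)$ is the minimum, over all joins $J$ of $G$, of the number of components with an odd number of vertices of the complement $(V(G),E(G)\setminus J)$. Given three joins $J_1,J_2,J_3$ of $G$, let $E_0$ be the set of edges lying in none of them; the weak core with respect to them is $G[E_0\cup E_2\cup E_3]$ (where $E_i$ is the set of edges in exactly $i$ of the joins), and it is called a weak $l$-core with $l=|E_0|+\frac{3}{2}\sum_{i=1}^3 n(J_i)$. Then $\mu'_3(G)$ is the minimum $l$ such that $G$ has a weak $l$-core, i.e. the minimum of $|E_0|+\frac{3}{2}\sum_{i=1}^3 n(J_i)$ over all triples of joins $J_1,J_2,J_3$ of $G$. *)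

theory Defs
  imports Complex_Main
begin

text \<open>Finite loopless multigraphs: vertex set V, edge set E (edges are abstract
  objects, so parallel edges are allowed), each edge e has a 2-element set
  ends e of endpoints in V.\<close>

definition multigraph :: "'a set \<Rightarrow> 'e set \<Rightarrow> ('e \<Rightarrow> 'a set) \<Rightarrow> bool" where
  "multigraph V E ends \<longleftrightarrow> finite V \<and> finite E \<and>
     (\<forall>e\<in>E. ends e \<subseteq> V \<and> card (ends e) = 2)"

definition deg :: "('e \<Rightarrow> 'a set) \<Rightarrow> 'e set \<Rightarrow> 'a \<Rightarrow> nat" where
  "deg ends F v = card {e\<in>F. v \<in> ends e}"

definition cubic :: "'a set \<Rightarrow> 'e set \<Rightarrow> ('e \<Rightarrow> 'a set) \<Rightarrow> bool" where
  "cubic V E ends \<longleftrightarrow> multigraph V E ends \<and> (\<forall>v\<in>V. deg ends E v = 3)"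

definition adj :: "('e \<Rightarrow> 'a set) \<Rightarrow> 'e set \<Rightarrow> ('a \<times> 'a) set" where
  "adj ends F = {(u, w). \<exists>e\<in>F. ends e = {u, w}}"

definition bridgeless :: "'a set \<Rightarrow> 'e set \<Rightarrow> ('e \<Rightarrow> 'a set) \<Rightarrow> bool" where
  "bridgeless V E ends \<longleftrightarrow>
     (\<forall>e\<in>E. \<forall>u w. ends e = {u, w} \<longrightarrow> (u, w) \<in> (adj ends (E - {e}))\<^sup>*)"

definition components :: "'a set \<Rightarrow> ('e \<Rightarrow> 'a set) \<Rightarrow> 'e set \<Rightarrow> 'a set set" where
  "components V ends F = (\<lambda>v. {u\<in>V. (v, u) \<in> (adj ends F)\<^sup>*}) ` V"

definition is_join :: "'a set \<Rightarrow> 'e set \<Rightarrow> ('e \<Rightarrow> 'a set) \<Rightarrow> 'e set \<Rightarrow> bool" where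
  "is_join V E ends J \<longleftrightarrow> J \<subseteq> E \<and>
     (\<forall>v\<in>V. even (deg ends J v) = even (deg ends E v))"

definition n_join :: "'a set \<Rightarrow> ('e \<Rightarrow> 'a set) \<Rightarrow> 'e set \<Rightarrow> nat" where
  "n_join V ends J = card {v\<in>V. deg ends J v = 3}"

definition odd_comps :: "'a set \<Rightarrow> 'e set \<Rightarrow> ('e \<Rightarrow> 'a set) \<Rightarrow> 'e set \<Rightarrow> nat" where
  "odd_comps V E ends J = card {C \<in> components V ends (E - J). odd (card C)}"

definition weak_oddness :: "'a set \<Rightarrow> 'e set \<Rightarrow> ('e \<Rightarrow> 'a set) \<Rightarrow> nat" where
  "weak_oddness V E ends = Min {odd_comps V E ends J | J. is_join V E ends J}"

definition mu3' :: "'a set \<Rightarrow> 'e set \<Rightarrow> ('e \<Rightarrow> 'a set) \<Rightarrow> real" where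
  "mu3' V E ends = Min {real (card {e\<in>E. e \<notin> J1 \<and> e \<notin> J2 \<and> e \<notin> J3})
        + 3/2 * real (n_join V ends J1 + n_join V ends J2 + n_join V ends J3)
      | J1 J2 J3. is_join V E ends J1 \<and> is_join V E ends J2 \<and> is_join V E ends J3}"

end

theory Submission imports Defs begin

lemma adj_swap: "(a, b) \<in> adj ends F \<Longrightarrow> (b, a) \<in> adj ends F"
proof -
  assume "(a, b) \<in> adj ends F"
  then obtain e where e: "e \<in> F" "ends e = {a, b}" unfolding adj_def by blast
  have "{a, b} = {b, a}" by blast
  with e have "ends e = {b, a}" by simp
  with e(1) show ?thesis unfolding adj_def by blast
qed

lemma adj_sym: "sym (adj ends F)"
  by (rule symI) (rule adj_swap)

definition compf :: "'a set \<Rightarrow> ('e \<Rightarrow> 'a set) \<Rightarrow> 'e set \<Rightarrow> 'a \<Rightarrow> 'a set" where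
  "compf V ends F v = {u\<in>V. (v, u) \<in> (adj ends F)\<^sup>*}"

lemma components_compf: "components V ends F = compf V ends F ` V"
  unfolding components_def compf_def by simp

lemma rt_sym: "(u, w) \<in> (adj ends F)\<^sup>* \<Longrightarrow> (w, u) \<in> (adj ends F)\<^sup>*"
  using sym_rtrancl[OF adj_sym[of ends F]] by (meson symD)

lemma self_in_compf: "v \<in> V \<Longrightarrow> v \<in> compf V ends F v"
  unfolding compf_def by simp

lemma compf_eq:
  assumes "x \<in> compf V ends F v" shows "compf V ends F x = compf V ends F v"
proof -
  have vx: "(v, x) \<in> (adj ends F)\<^sup>*" using assms unfolding compf_def by simp
  then have xv: "(x, v) \<in> (adj ends F)\<^sup>*" by (rule rt_sym)
  have "(x, u) \<in> (adj ends F)\<^sup>* \<longleftrightarrow> (v, u) \<in> (adj ends F)\<^sup>*" for u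
    using vx xv rtrancl_trans[of x v _ u] rtrancl_trans[of v x _ u] by blast
  then show ?thesis unfolding compf_def by simp
qed

lemma comp_eq:
  assumes "C \<in> components V ends F" "x \<in> C" shows "C = compf V ends F x"
proof -
  obtain v where v: "v \<in> V" "C = compf V ends F v" using assms(1) unfolding components_compf by blast
  show ?thesis using compf_eq[of x V ends F v] assms(2) v(2) by simp
qed

lemma comp_disj:
  assumes "C \<in> components V ends F" "D \<in> components V ends F" "C \<noteq> D"
  shows "C \<inter> D = {}"
proof (rule ccontr)
  assume "C \<inter> D \<noteq> {}"
  then obtain x where "x \<in> C" "x \<in> D" by blast
  then show False using comp_eq[OF assms(1)] comp_eq[OF assms(2)] assms(3) by metis
qed

lemma comp_sub: "C \<in> components V ends F \<Longrightarrow> C \<subseteq> V"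
  unfolding components_compf compf_def by auto

lemma comp_closed:
  assumes "C \<in> components V ends F" "e \<in> F" "ends e \<subseteq> V" "card (ends e) = 2"
    "ends e \<inter> C \<noteq> {}"
  shows "ends e \<subseteq> C"
proof -
  obtain a b where ab: "ends e = {a, b}" "a \<noteq> b" using assms(4) by (meson card_2_iff)
  have adj0: "(a, b) \<in> adj ends F"
    using ab assms(2) unfolding adj_def by blast
  have adj1: "(a, b) \<in> adj ends F" "(b, a) \<in> adj ends F"
    using adj0 adj_swap by auto
  obtain x where x: "x \<in> ends e" "x \<in> C" using assms(5) by blast
  have C: "C = compf V ends F x" by (rule comp_eq[OF assms(1) x(2)])
  have xab: "x = a \<or> x = b" using x(1) ab by auto
  have "(x, a) \<in> (adj ends F)\<^sup>*" "(x, b) \<in> (adj ends F)\<^sup>*"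
    using xab adj1 by auto
  moreover have "a \<in> V" "b \<in> V" using ab assms(3) by auto
  ultimately have "a \<in> C" "b \<in> C" unfolding C compf_def by auto
  then show ?thesis using ab by auto
qed


lemma odd_le3: "(n::nat) \<le> 3 \<Longrightarrow> odd n \<Longrightarrow> n = 1 \<or> n = 3"
  by (cases n; cases "n - 1"; cases "n - 2"; auto)

lemma deg_as_sum:
  assumes "finite X"
  shows "deg ends X v = (\<Sum>e\<in>X. if v \<in> ends e then 1 else 0)"
  unfolding deg_def using assms by (simp add: sum.inter_filter[symmetric])

lemma handshake:
  assumes "finite A" "finite X"
  shows "(\<Sum>v\<in>A. deg ends X v) = (\<Sum>e\<in>X. card (ends e \<inter> A))"
proof -
  have "(\<Sum>v\<in>A. deg ends X v) = (\<Sum>v\<in>A. \<Sum>e\<in>X. if v \<in> ends e then 1 else 0)"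
    by (rule sum.cong[OF refl deg_as_sum[OF assms(2)]])
  also have "\<dots> = (\<Sum>e\<in>X. \<Sum>v\<in>A. if v \<in> ends e then 1 else 0)"
    by (rule sum.swap)
  also have "\<dots> = (\<Sum>e\<in>X. card (ends e \<inter> A))"
  proof (rule sum.cong[OF refl])
    fix e
    have "card (ends e \<inter> A) = card {v\<in>A. v \<in> ends e}"
      by (rule arg_cong[where f=card]) blast
    also have "\<dots> = (\<Sum>v\<in>A. if v \<in> ends e then 1 else 0)"
      using assms(1) by (simp add: sum.inter_filter[symmetric])
    finally show "(\<Sum>v\<in>A. if v \<in> ends e then 1 else 0) = card (ends e \<inter> A)" by simp
  qed
  finally show ?thesis .
qed

lemma deg_split:
  assumes "finite X"
  shows "deg ends X v = deg ends (X \<inter> Y) v + deg ends (X - Y) v"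
proof -
  have "{e\<in>X. v \<in> ends e} = {e\<in>X \<inter> Y. v \<in> ends e} \<union> {e\<in>X - Y. v \<in> ends e}" by blast
  moreover have "{e\<in>X \<inter> Y. v \<in> ends e} \<inter> {e\<in>X - Y. v \<in> ends e} = {}" by blast
  moreover have "finite {e\<in>X \<inter> Y. v \<in> ends e}" "finite {e\<in>X - Y. v \<in> ends e}"
    using assms by auto
  ultimately show ?thesis unfolding deg_def by (simp add: card_Un_disjoint)
qed

lemma deg_mono:
  assumes "finite Y" "X \<subseteq> Y" shows "deg ends X v \<le> deg ends Y v"
  unfolding deg_def using assms by (intro card_mono) auto

lemma t1: "(p::nat) + s \<le> 3 \<Longrightarrow> 1 \<le> s \<Longrightarrow> p \<le> 2*s" by linarith

lemma fin_arith:
  fixes o1 o2 o3 n1 n2 n3 b1 b2 b3 s1 s2 s3 x y e :: nat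
  assumes "o1 \<le> n1 + b1 + s1" "o2 \<le> n2 + b2 + s2" "o3 \<le> n3 + b3 + s3"
    "2 * b1 \<le> x" "2 * b2 \<le> x" "2 * b3 \<le> x"
    "s1 + s2 + s3 \<le> 2 * y + 2 * (n1 + n2 + n3)" "y + x = e"
  shows "2 * (o1 + o2 + o3) \<le> 4 * e + 6 * (n1 + n2 + n3)"
proof -
  have a: "2 * (o1 + o2 + o3) \<le> 2 * (n1 + n2 + n3) + 2 * (b1 + b2 + b3) + 2 * (s1 + s2 + s3)"
    using assms(1-3) by simp
  have b: "2 * (b1 + b2 + b3) \<le> 3 * x" using assms(4-6) by simp
  have c: "2 * (s1 + s2 + s3) \<le> 4 * y + 4 * (n1 + n2 + n3)" using assms(7) by simp
  have d: "4 * e = 4 * y + 4 * x" using assms(8) by simp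
  show ?thesis using a b c d by simp
qed

lemma fin_real: "6 * (w::real) \<le> 4 * c + 6 * n \<Longrightarrow> w \<le> 2/3 * (c + 3/2 * n)"
  by (simp add: algebra_simps)

lemma three:
  assumes "\<not> (a = b \<and> b = c)"
  shows "(if a = b then 1 else 0) + (if b = c then 1 else 0) + (if c = a then 1 else 0) + card {a, b, c} \<le> (3::nat)"
proof (cases "a = b")
  case True
  then have "b \<noteq> c" using assms by blast
  then show ?thesis using True by auto
next
  case False
  show ?thesis
  proof (cases "b = c")
    case True
    then have "c \<noteq> a" using False by blast
    then show ?thesis using True False by auto
  next
    case False2: False
    show ?thesis
    proof (cases "c = a")
      case True
      then have "{a, b, c} = {a, b}" by auto
      then show ?thesis using True False False2 by auto
    next
      case False3: False
      then show ?thesis using False False2 by auto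
    qed
  qed
qed

definition cval :: "'a set \<Rightarrow> 'e set \<Rightarrow> ('e \<Rightarrow> 'a set) \<Rightarrow> 'a set \<Rightarrow> 'e set \<Rightarrow> 'e set \<Rightarrow> 'a \<Rightarrow> nat" where
  "cval V E ends T J J' v = (if deg ends J v \<noteq> 3 \<and> compf V ends (E - J) v \<inter> T = {} then deg ends (J' \<inter> J) v else 0)"

definition bval :: "('e \<Rightarrow> 'a set) \<Rightarrow> 'e set \<Rightarrow> 'a \<Rightarrow> nat" where
  "bval ends J v = (if deg ends J v = 3 then 1 else 0)"

context
  fixes V :: "'a set" and E :: "'e set" and ends :: "'e \<Rightarrow> 'a set"
  assumes mg: "multigraph V E ends" and cub: "\<forall>v\<in>V. deg ends E v = 3"
begin

lemma finV: "finite V" and finE: "finite E"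
  and endsV: "e \<in> E \<Longrightarrow> ends e \<subseteq> V" and ends2: "e \<in> E \<Longrightarrow> card (ends e) = 2"
  using mg unfolding multigraph_def by auto

lemma join_odd:
  assumes "is_join V E ends J" "v \<in> V" shows "odd (deg ends J v)"
  using assms cub unfolding is_join_def by auto

lemma join_deg:
  assumes "is_join V E ends J" "v \<in> V" shows "deg ends J v = 1 \<or> deg ends J v = 3"
proof -
  have "J \<subseteq> E" using assms unfolding is_join_def by auto
  then have "deg ends J v \<le> 3" using deg_mono[OF finE] cub assms(2) by metis
  moreover have "odd (deg ends J v)" by (rule join_odd[OF assms])
  ultimately show ?thesis by (rule odd_le3)
qed

lemma comp_parity:
  assumes J: "is_join V E ends J" and J': "is_join V E ends J'"
    and C: "C \<in> components V ends (E - J)" and oddC: "odd (card C)"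
  shows "odd (\<Sum>v\<in>C. deg ends (J' \<inter> J) v)"
proof -
  have CV: "C \<subseteq> V" using comp_sub[OF C] .
  have finC: "finite C" using CV finV finite_subset by blast
  have J'E: "J' \<subseteq> E" using J' unfolding is_join_def by auto
  have finJ': "finite J'" using J'E finE finite_subset by blast
  have s1: "(\<Sum>v\<in>C. deg ends J' v) = (\<Sum>v\<in>C. deg ends (J' \<inter> J) v) + (\<Sum>v\<in>C. deg ends (J' - J) v)"
    unfolding sum.distrib[symmetric] by (rule sum.cong[OF refl deg_split[OF finJ']])
  have "{a\<in>C. odd (deg ends J' a)} = C" using join_odd[OF J'] CV by auto
  then have o1: "odd (\<Sum>v\<in>C. deg ends J' v)"
    using oddC even_sum_iff[OF finC, of "\<lambda>v. deg ends J' v"] by simp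
  have "(\<Sum>v\<in>C. deg ends (J' - J) v) = (\<Sum>e\<in>J' - J. card (ends e \<inter> C))"
    using handshake[OF finC, of "J' - J" ends] finJ' by simp
  moreover have "even (card (ends e \<inter> C))" if e: "e \<in> J' - J" for e
  proof (cases "ends e \<inter> C = {}")
    case True then show ?thesis by simp
  next
    case False
    have eE: "e \<in> E" and eF: "e \<in> E - J" using e J'E by auto
    have "ends e \<subseteq> C" by (rule comp_closed[OF C eF endsV[OF eE] ends2[OF eE] False])
    then have "ends e \<inter> C = ends e" by auto
    then show ?thesis using ends2 e J'E by auto
  qed
  ultimately have e2: "even (\<Sum>v\<in>C. deg ends (J' - J) v)"
    by (metis (no_types, lifting) dvd_sum)
  have "odd ((\<Sum>v\<in>C. deg ends (J' \<inter> J) v) + (\<Sum>v\<in>C. deg ends (J' - J) v))"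
    using o1 unfolding s1 .
  then show ?thesis using e2 by (auto simp: even_add)
qed

lemma finite_comps: "finite (components V ends F)"
  unfolding components_compf using finV by simp

lemma finite_comp: "C \<in> components V ends F \<Longrightarrow> finite C"
  by (rule finite_subset[OF comp_sub finV])

lemma comps_meetT:
  assumes J: "is_join V E ends J" and XF: "X \<subseteq> E - J"
    and Tdeg: "\<forall>v\<in>T. 2 \<le> deg ends X v"
  shows "2 * card {C\<in>components V ends (E - J). C \<inter> T \<noteq> {}} \<le> card X"
proof -
  let ?K = "components V ends (E - J)"
  let ?B = "{C\<in>?K. C \<inter> T \<noteq> {}}"
  define g where "g C = {e\<in>X. ends e \<subseteq> C}" for C
  have "X \<subseteq> E" using XF by blast
  then have finX: "finite X" using finE by (rule finite_subset)
  have finB: "finite ?B" using finite_comps by simp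
  have g2: "2 \<le> card (g C)" if C: "C \<in> ?B" for C
  proof -
    obtain v where v: "v \<in> C" "v \<in> T" using C by blast
    have "{e\<in>X. v \<in> ends e} \<subseteq> g C"
    proof
      fix e assume e: "e \<in> {e\<in>X. v \<in> ends e}"
      then have eE: "e \<in> E" and eF: "e \<in> E - J" using XF by auto
      have ne: "ends e \<inter> C \<noteq> {}" using e v by auto
      have CK: "C \<in> ?K" using C by blast
      show "e \<in> g C" using comp_closed[OF CK eF endsV[OF eE] ends2[OF eE] ne] e unfolding g_def by blast
    qed
    moreover have "finite (g C)" using finX unfolding g_def by auto
    ultimately have "card {e\<in>X. v \<in> ends e} \<le> card (g C)" by (simp add: card_mono)
    moreover have "2 \<le> card {e\<in>X. v \<in> ends e}" using Tdeg v unfolding deg_def by auto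
    ultimately show ?thesis by simp
  qed
  have disj: "\<forall>C\<in>?B. \<forall>D\<in>?B. C \<noteq> D \<longrightarrow> g C \<inter> g D = {}"
  proof (intro ballI impI)
    fix C D assume C: "C \<in> ?B" and D: "D \<in> ?B" and CD: "C \<noteq> D"
    have CD0: "C \<inter> D = {}" using comp_disj C D CD by blast
    show "g C \<inter> g D = {}"
    proof (rule ccontr)
      assume "g C \<inter> g D \<noteq> {}"
      then obtain e where e: "e \<in> X" "ends e \<subseteq> C" "ends e \<subseteq> D" unfolding g_def by blast
      have "card (ends e) = 2" using e(1) XF ends2 by auto
      then have "ends e \<noteq> {}" by auto
      then show False using e CD0 by blast
    qed
  qed
  have "2 * card ?B = (\<Sum>C\<in>?B. 2)" by simp
  also have "\<dots> \<le> (\<Sum>C\<in>?B. card (g C))" by (rule sum_mono) (rule g2)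
  also have "\<dots> = card (\<Union>(g ` ?B))"
  proof (rule card_UN_disjoint[symmetric])
    show "finite ?B" by (rule finB)
    show "\<forall>C\<in>?B. finite (g C)" using finX unfolding g_def by simp
    show "\<forall>C\<in>?B. \<forall>D\<in>?B. C \<noteq> D \<longrightarrow> g C \<inter> g D = {}" by (rule disj)
  qed
  also have "\<dots> \<le> card X"
  proof -
    have "\<Union>(g ` ?B) \<subseteq> X" unfolding g_def by blast
    then show ?thesis using finX by (simp add: card_mono)
  qed
  finally show ?thesis .
qed

lemma per_join:
  assumes J: "is_join V E ends J" and J': "is_join V E ends J'"
  shows "odd_comps V E ends J \<le> n_join V ends J + card {C\<in>components V ends (E - J). C \<inter> T \<noteq> {}}
     + (\<Sum>v\<in>V. if deg ends J v \<noteq> 3 \<and> compf V ends (E - J) v \<inter> T = {} then deg ends (J' \<inter> J) v else 0)"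
proof -
  let ?K = "components V ends (E - J)"
  let ?Jv = "{v\<in>V. deg ends J v = 3}"
  let ?comp = "compf V ends (E - J)"
  let ?w = "\<lambda>v. deg ends (J' \<inter> J) v"
  let ?c = "\<lambda>v. if deg ends J v \<noteq> 3 \<and> ?comp v \<inter> T = {} then ?w v else 0"
  let ?A1 = "{C\<in>?K. C \<inter> ?Jv \<noteq> {}}"
  let ?A2 = "{C\<in>?K. odd (card C) \<and> C \<inter> ?Jv = {}}"
  let ?BT = "{C\<in>?K. C \<inter> T \<noteq> {}}"
  let ?A3 = "{C\<in>?K. odd (card C) \<and> C \<inter> ?Jv = {} \<and> C \<inter> T = {}}"
  have finK: "finite ?K" by (rule finite_comps)
  have "odd_comps V E ends J = card {C\<in>?K. odd (card C)}" unfolding odd_comps_def by simp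
  also have "\<dots> \<le> card (?A1 \<union> ?A2)" using finK by (intro card_mono) auto
  also have "\<dots> \<le> card ?A1 + card ?A2" by (rule card_Un_le)
  finally have s1: "odd_comps V E ends J \<le> card ?A1 + card ?A2" .
  have "?A1 \<subseteq> ?comp ` ?Jv"
  proof
    fix C assume C: "C \<in> ?A1"
    then obtain x where x: "x \<in> C" "x \<in> ?Jv" by blast
    have CK: "C \<in> ?K" using C by blast
    have "C = ?comp x" by (rule comp_eq[OF CK x(1)])
    then show "C \<in> ?comp ` ?Jv" using x(2) by blast
  qed
  then have "card ?A1 \<le> card (?comp ` ?Jv)" using finV by (intro card_mono) auto
  also have "\<dots> \<le> card ?Jv" by (rule card_image_le) (use finV in auto)
  finally have s2: "card ?A1 \<le> n_join V ends J" unfolding n_join_def .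
  have "card ?A2 \<le> card (?BT \<union> ?A3)" using finK by (intro card_mono) auto
  also have "\<dots> \<le> card ?BT + card ?A3" by (rule card_Un_le)
  finally have s3: "card ?A2 \<le> card ?BT + card ?A3" .
  have finA3: "finite ?A3" using finK by simp
  have "card ?A3 = (\<Sum>C\<in>?A3. 1)" by simp
  also have "\<dots> \<le> (\<Sum>C\<in>?A3. \<Sum>v\<in>C. ?w v)"
  proof (rule sum_mono)
    fix C assume C: "C \<in> ?A3"
    have "odd (\<Sum>v\<in>C. ?w v)" using comp_parity[OF J J'] C by blast
    then show "1 \<le> (\<Sum>v\<in>C. ?w v)" by (cases "(\<Sum>v\<in>C. ?w v)") auto
  qed
  also have "\<dots> = (\<Sum>v\<in>\<Union>?A3. ?w v)"
  proof (rule sum.Union_disjoint[symmetric, simplified])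
    show "\<forall>A\<in>?A3. finite A" using finite_comp by blast
    show "\<forall>A\<in>?A3. \<forall>B\<in>?A3. A \<noteq> B \<longrightarrow> A \<inter> B = {}"
      using comp_disj[of _ V ends "E - J"] by blast
  qed
  also have "\<dots> = (\<Sum>v\<in>\<Union>?A3. ?c v)"
  proof (rule sum.cong[OF refl])
    fix v assume "v \<in> \<Union>?A3"
    then obtain C where C: "C \<in> ?A3" "v \<in> C" by blast
    have CK: "C \<in> ?K" using C(1) by blast
    have Ceq: "C = ?comp v" by (rule comp_eq[OF CK C(2)])
    have "v \<in> V" using comp_sub[OF CK] C(2) by blast
    then have "deg ends J v \<noteq> 3" using C by blast
    moreover have "?comp v \<inter> T = {}" using C Ceq by simp
    ultimately show "?w v = ?c v" by simp
  qed
  also have "\<dots> \<le> (\<Sum>v\<in>V. ?c v)"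
  proof (rule sum_mono2)
    show "finite V" by (rule finV)
    show "\<Union>?A3 \<subseteq> V" using comp_sub[of _ V ends "E - J"] by blast
  qed simp
  finally have s4: "card ?A3 \<le> (\<Sum>v\<in>V. ?c v)" .
  show ?thesis using s1 s2 s3 s4 by linarith
qed

lemma cval_le1:
  assumes J: "is_join V E ends J" and v: "v \<in> V"
  shows "cval V E ends T J J' v + bval ends J v \<le> 1"
proof (cases "deg ends J v = 3")
  case True then show ?thesis unfolding cval_def bval_def by simp
next
  case False
  then have d1: "deg ends J v = 1" using join_deg[OF J v] by simp
  have "J \<subseteq> E" using J unfolding is_join_def by simp
  then have "finite J" using finE by (rule finite_subset)
  then have "deg ends (J' \<inter> J) v \<le> deg ends J v" by (rule deg_mono) blast
  then show ?thesis using d1 False unfolding cval_def bval_def by simp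
qed

lemma join_single:
  assumes J: "is_join V E ends J" and v: "v \<in> V" and d: "deg ends J v \<noteq> 3"
  obtains a where "{e\<in>J. v \<in> ends e} = {a}"
proof -
  have "deg ends J v = 1" using join_deg[OF J v] d by simp
  then have "card {e\<in>J. v \<in> ends e} = 1" unfolding deg_def .
  then show ?thesis using that by (rule card_1_singletonE)
qed

lemma vertex_bound:
  assumes J1: "is_join V E ends J1" and J2: "is_join V E ends J2" and J3: "is_join V E ends J3"
    and v: "v \<in> V"
    and E0def: "E0 = {e\<in>E. e \<notin> J1 \<and> e \<notin> J2 \<and> e \<notin> J3}"
    and Tdef: "T = {v\<in>V. 2 \<le> deg ends E0 v}"
    and Xdef: "X = {e\<in>E0. ends e \<inter> T \<noteq> {}}"
  shows "cval V E ends T J1 J2 v + cval V E ends T J2 J3 v + cval V E ends T J3 J1 v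
         \<le> deg ends (E0 - X) v + 2 * (bval ends J1 v + bval ends J2 v + bval ends J3 v)"
proof (cases "deg ends J1 v = 3 \<or> deg ends J2 v = 3 \<or> deg ends J3 v = 3")
  case True
  have "cval V E ends T J1 J2 v + bval ends J1 v \<le> 1" by (rule cval_le1[OF J1 v])
  moreover have "cval V E ends T J2 J3 v + bval ends J2 v \<le> 1" by (rule cval_le1[OF J2 v])
  moreover have "cval V E ends T J3 J1 v + bval ends J3 v \<le> 1" by (rule cval_le1[OF J3 v])
  moreover have "1 \<le> bval ends J1 v + bval ends J2 v + bval ends J3 v"
    using True unfolding bval_def by auto
  ultimately have "(cval V E ends T J1 J2 v + cval V E ends T J2 J3 v + cval V E ends T J3 J1 v)
      + (bval ends J1 v + bval ends J2 v + bval ends J3 v) \<le> 3"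
    "1 \<le> bval ends J1 v + bval ends J2 v + bval ends J3 v" by linarith+
  then have "cval V E ends T J1 J2 v + cval V E ends T J2 J3 v + cval V E ends T J3 J1 v
         \<le> 2 * (bval ends J1 v + bval ends J2 v + bval ends J3 v)" by (rule t1)
  then show ?thesis by linarith
next
  case False
  then have n1: "deg ends J1 v \<noteq> 3" and n2: "deg ends J2 v \<noteq> 3" and n3: "deg ends J3 v \<noteq> 3"
    by auto
  obtain a1 where A1: "{e\<in>J1. v \<in> ends e} = {a1}" using join_single[OF J1 v n1] by blast
  obtain a2 where A2: "{e\<in>J2. v \<in> ends e} = {a2}" using join_single[OF J2 v n2] by blast
  obtain a3 where A3: "{e\<in>J3. v \<in> ends e} = {a3}" using join_single[OF J3 v n3] by blast
  have J1E: "J1 \<subseteq> E" using J1 unfolding is_join_def by simp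
  have J2E: "J2 \<subseteq> E" using J2 unfolding is_join_def by simp
  have J3E: "J3 \<subseteq> E" using J3 unfolding is_join_def by simp
  have E0F: "E0 \<subseteq> E - J1" "E0 \<subseteq> E - J2" "E0 \<subseteq> E - J3" unfolding E0def by auto
  show ?thesis
  proof (cases "v \<in> T \<or> (\<exists>x\<in>X. v \<in> ends x)")
    case True
    have meet: "compf V ends (E - J) v \<inter> T \<noteq> {}" if "E0 \<subseteq> E - J" for J
    proof -
      show ?thesis
      proof (cases "v \<in> T")
        case True
        then show ?thesis using self_in_compf[OF v] by blast
      next
        case False
        then obtain x where x: "x \<in> X" "v \<in> ends x" using \<open>v \<in> T \<or> (\<exists>x\<in>X. v \<in> ends x)\<close> by blast
        have xE0: "x \<in> E0" and xT: "ends x \<inter> T \<noteq> {}" using x(1) unfolding Xdef by auto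
        have xE: "x \<in> E" using xE0 unfolding E0def by simp
        have xF: "x \<in> E - J" using xE0 that by blast
        have CK: "compf V ends (E - J) v \<in> components V ends (E - J)"
          unfolding components_compf using v by blast
        have ne: "ends x \<inter> compf V ends (E - J) v \<noteq> {}" using x(2) self_in_compf[OF v] by blast
        have "ends x \<subseteq> compf V ends (E - J) v"
          by (rule comp_closed[OF CK xF endsV[OF xE] ends2[OF xE] ne])
        then show ?thesis using xT by blast
      qed
    qed
    have "cval V E ends T J1 J2 v = 0" using meet[OF E0F(1)] unfolding cval_def by simp
    moreover have "cval V E ends T J2 J3 v = 0" using meet[OF E0F(2)] unfolding cval_def by simp
    moreover have "cval V E ends T J3 J1 v = 0" using meet[OF E0F(3)] unfolding cval_def by simp
    ultimately show ?thesis by simp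
  next
    case False
    then have vT: "v \<notin> T" and noX: "\<forall>x\<in>X. v \<notin> ends x" by auto
    let ?S = "{e\<in>E. v \<in> ends e}"
    have finS: "finite ?S" using finE by simp
    have cardS: "card ?S = 3" using cub v unfolding deg_def by simp
    have a1: "a1 \<in> J1" "v \<in> ends a1" using A1 by auto
    have a2: "a2 \<in> J2" "v \<in> ends a2" using A2 by auto
    have a3: "a3 \<in> J3" "v \<in> ends a3" using A3 by auto
    have aS: "{a1, a2, a3} \<subseteq> ?S" using a1 a2 a3 J1E J2E J3E by auto
    have m1: "e \<in> J1 \<longleftrightarrow> e = a1" if "v \<in> ends e" for e using A1 that by blast
    have m2: "e \<in> J2 \<longleftrightarrow> e = a2" if "v \<in> ends e" for e using A2 that by blast
    have m3: "e \<in> J3 \<longleftrightarrow> e = a3" if "v \<in> ends e" for e using A3 that by blast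
    have E0v: "{e\<in>E0. v \<in> ends e} = ?S - {a1, a2, a3}"
      unfolding E0def using m1 m2 m3 by blast
    have dE0: "deg ends E0 v = 3 - card {a1, a2, a3}"
      unfolding deg_def E0v using card_Diff_subset[OF _ aS] finS cardS
      by (metis (no_types, lifting) finite_subset aS)
    have "{e\<in>E0 - X. v \<in> ends e} = {e\<in>E0. v \<in> ends e}" using noX by blast
    then have dY: "deg ends (E0 - X) v = deg ends E0 v" unfolding deg_def by simp
    have le1: "deg ends E0 v < 2" using vT v unfolding Tdef by simp
    have notall: "\<not> (a1 = a2 \<and> a2 = a3)"
    proof
      assume "a1 = a2 \<and> a2 = a3"
      then have "{a1, a2, a3} = {a1}" by auto
      then show False using le1 dE0 by simp
    qed
    have w1: "deg ends (J2 \<inter> J1) v = (if a1 = a2 then 1 else 0)"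
    proof -
      have "{e\<in>J2 \<inter> J1. v \<in> ends e} = (if a1 = a2 then {a1} else {})"
        using m1 m2 a1 by auto
      then show ?thesis unfolding deg_def by simp
    qed
    have w2: "deg ends (J3 \<inter> J2) v = (if a2 = a3 then 1 else 0)"
    proof -
      have "{e\<in>J3 \<inter> J2. v \<in> ends e} = (if a2 = a3 then {a2} else {})"
        using m2 m3 a2 by auto
      then show ?thesis unfolding deg_def by simp
    qed
    have w3: "deg ends (J1 \<inter> J3) v = (if a3 = a1 then 1 else 0)"
    proof -
      have "{e\<in>J1 \<inter> J3. v \<in> ends e} = (if a3 = a1 then {a3} else {})"
        using m3 m1 a3 by auto
      then show ?thesis unfolding deg_def by simp
    qed
    have c1: "cval V E ends T J1 J2 v \<le> (if a1 = a2 then 1 else 0)"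
      using w1 unfolding cval_def by simp
    have c2: "cval V E ends T J2 J3 v \<le> (if a2 = a3 then 1 else 0)"
      using w2 unfolding cval_def by simp
    have c3: "cval V E ends T J3 J1 v \<le> (if a3 = a1 then 1 else 0)"
      using w3 unfolding cval_def by simp
    have th: "(if a1 = a2 then 1 else 0) + (if a2 = a3 then 1 else 0) + (if a3 = a1 then 1 else 0)
              + card {a1, a2, a3} \<le> (3::nat)" by (rule three[OF notall])
    have "card {a1, a2, a3} \<le> 3" using card_mono[OF finS aS] cardS by simp
    then show ?thesis using c1 c2 c3 th dY dE0 by linarith
  qed
qed

lemma sum_bval: "(\<Sum>v\<in>V. bval ends J v) = n_join V ends J"
  unfolding bval_def n_join_def using finV by (simp add: sum.inter_filter[symmetric])

lemma sum_degY:
  assumes "Y \<subseteq> E" shows "(\<Sum>v\<in>V. deg ends Y v) = 2 * card Y"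
proof -
  have finY: "finite Y" using assms finE by (rule finite_subset)
  have "(\<Sum>v\<in>V. deg ends Y v) = (\<Sum>e\<in>Y. card (ends e \<inter> V))" by (rule handshake[OF finV finY])
  also have "\<dots> = (\<Sum>e\<in>Y. 2)"
  proof (rule sum.cong[OF refl])
    fix e assume "e \<in> Y"
    then have eE: "e \<in> E" using assms by blast
    have "ends e \<inter> V = ends e" using endsV[OF eE] by blast
    then show "card (ends e \<inter> V) = 2" using ends2[OF eE] by simp
  qed
  finally show ?thesis by simp
qed

lemma main_bound:
  assumes J1: "is_join V E ends J1" and J2: "is_join V E ends J2" and J3: "is_join V E ends J3"
  shows "2 * (odd_comps V E ends J1 + odd_comps V E ends J2 + odd_comps V E ends J3)
     \<le> 4 * card {e\<in>E. e \<notin> J1 \<and> e \<notin> J2 \<and> e \<notin> J3}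
        + 6 * (n_join V ends J1 + n_join V ends J2 + n_join V ends J3)"
proof -
  define E0 where "E0 = {e\<in>E. e \<notin> J1 \<and> e \<notin> J2 \<and> e \<notin> J3}"
  define T where "T = {v\<in>V. 2 \<le> deg ends E0 v}"
  define X where "X = {e\<in>E0. ends e \<inter> T \<noteq> {}}"
  have XF1: "X \<subseteq> E - J1" and XF2: "X \<subseteq> E - J2" and XF3: "X \<subseteq> E - J3"
    unfolding X_def E0_def by auto
  have Tdeg: "\<forall>v\<in>T. 2 \<le> deg ends X v"
  proof
    fix v assume v: "v \<in> T"
    have "{e\<in>X. v \<in> ends e} = {e\<in>E0. v \<in> ends e}" unfolding X_def using v by blast
    then have "deg ends X v = deg ends E0 v" unfolding deg_def by simp
    then show "2 \<le> deg ends X v" using v unfolding T_def by simp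
  qed
  have p1: "odd_comps V E ends J1 \<le> n_join V ends J1 + card {C\<in>components V ends (E - J1). C \<inter> T \<noteq> {}}
     + (\<Sum>v\<in>V. cval V E ends T J1 J2 v)"
    using per_join[OF J1 J2, of T] unfolding cval_def .
  have p2: "odd_comps V E ends J2 \<le> n_join V ends J2 + card {C\<in>components V ends (E - J2). C \<inter> T \<noteq> {}}
     + (\<Sum>v\<in>V. cval V E ends T J2 J3 v)"
    using per_join[OF J2 J3, of T] unfolding cval_def .
  have p3: "odd_comps V E ends J3 \<le> n_join V ends J3 + card {C\<in>components V ends (E - J3). C \<inter> T \<noteq> {}}
     + (\<Sum>v\<in>V. cval V E ends T J3 J1 v)"
    using per_join[OF J3 J1, of T] unfolding cval_def .
  have q1: "2 * card {C\<in>components V ends (E - J1). C \<inter> T \<noteq> {}} \<le> card X"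
    by (rule comps_meetT[OF J1 XF1 Tdeg])
  have q2: "2 * card {C\<in>components V ends (E - J2). C \<inter> T \<noteq> {}} \<le> card X"
    by (rule comps_meetT[OF J2 XF2 Tdeg])
  have q3: "2 * card {C\<in>components V ends (E - J3). C \<inter> T \<noteq> {}} \<le> card X"
    by (rule comps_meetT[OF J3 XF3 Tdeg])
  have "(\<Sum>v\<in>V. cval V E ends T J1 J2 v + cval V E ends T J2 J3 v + cval V E ends T J3 J1 v)
     \<le> (\<Sum>v\<in>V. deg ends (E0 - X) v + 2 * (bval ends J1 v + bval ends J2 v + bval ends J3 v))"
    by (rule sum_mono) (rule vertex_bound[OF J1 J2 J3 _ E0_def T_def X_def])
  also have "\<dots> = 2 * card (E0 - X) + 2 * (n_join V ends J1 + n_join V ends J2 + n_join V ends J3)"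
  proof -
    have "E0 - X \<subseteq> E" unfolding E0_def by blast
    then have "(\<Sum>v\<in>V. deg ends (E0 - X) v) = 2 * card (E0 - X)" by (rule sum_degY)
    then show ?thesis
      by (simp add: sum.distrib sum_distrib_left[symmetric] sum_bval)
  qed
  finally have vb: "(\<Sum>v\<in>V. cval V E ends T J1 J2 v) + (\<Sum>v\<in>V. cval V E ends T J2 J3 v)
     + (\<Sum>v\<in>V. cval V E ends T J3 J1 v)
     \<le> 2 * card (E0 - X) + 2 * (n_join V ends J1 + n_join V ends J2 + n_join V ends J3)"
    by (simp add: sum.distrib)
  have finE0: "finite E0" unfolding E0_def using finE by simp
  have "X \<subseteq> E0" unfolding X_def by blast
  then have cX: "card (E0 - X) + card X = card E0"
    using finE0 by (metis card_Diff_subset card_mono diff_add finite_subset)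
  show ?thesis unfolding E0_def[symmetric] by (rule fin_arith[OF p1 p2 p3 q1 q2 q3 vb cX])
qed

end


theorem corollary2p4:
  fixes V :: "'a set" and E :: "'e set" and ends :: "'e \<Rightarrow> 'a set"
  assumes "cubic V E ends" and "bridgeless V E ends"
  shows "real (weak_oddness V E ends) \<le> 2/3 * mu3' V E ends"
proof -
  have mg: "multigraph V E ends" and cub: "\<forall>v\<in>V. deg ends E v = 3"
    using assms(1) unfolding cubic_def by auto
  have finE: "finite E" using mg unfolding multigraph_def by simp
  let ?JS = "{J. is_join V E ends J}"
  have "?JS \<subseteq> Pow E" unfolding is_join_def by auto
  then have finJS: "finite ?JS" using finE by (meson finite_Pow_iff finite_subset)
  have EJ: "is_join V E ends E" unfolding is_join_def by simp
  have wo_le: "weak_oddness V E ends \<le> odd_comps V E ends J" if J: "is_join V E ends J" for J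
  proof -
    have eq: "{odd_comps V E ends J | J. is_join V E ends J} = (\<lambda>J. odd_comps V E ends J) ` ?JS"
      by blast
    have "finite {odd_comps V E ends J | J. is_join V E ends J}" unfolding eq using finJS by simp
    moreover have "odd_comps V E ends J \<in> {odd_comps V E ends J | J. is_join V E ends J}" using J by blast
    ultimately show ?thesis unfolding weak_oddness_def by (rule Min_le)
  qed
  define f where "f = (\<lambda>(J1, J2, J3). real (card {e\<in>E. e \<notin> J1 \<and> e \<notin> J2 \<and> e \<notin> J3})
        + 3/2 * real (n_join V ends J1 + n_join V ends J2 + n_join V ends J3))"
  let ?M = "{real (card {e\<in>E. e \<notin> J1 \<and> e \<notin> J2 \<and> e \<notin> J3})
        + 3/2 * real (n_join V ends J1 + n_join V ends J2 + n_join V ends J3)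
      | J1 J2 J3. is_join V E ends J1 \<and> is_join V E ends J2 \<and> is_join V E ends J3}"
  have Msub: "?M \<subseteq> f ` (?JS \<times> ?JS \<times> ?JS)"
  proof
    fix x assume "x \<in> ?M"
    then obtain J1 J2 J3 where J: "is_join V E ends J1" "is_join V E ends J2" "is_join V E ends J3"
      and x: "x = real (card {e\<in>E. e \<notin> J1 \<and> e \<notin> J2 \<and> e \<notin> J3})
        + 3/2 * real (n_join V ends J1 + n_join V ends J2 + n_join V ends J3)" by blast
    have "x = f (J1, J2, J3)" unfolding x f_def by simp
    moreover have "(J1, J2, J3) \<in> ?JS \<times> ?JS \<times> ?JS" using J by simp
    ultimately show "x \<in> f ` (?JS \<times> ?JS \<times> ?JS)" by (rule image_eqI)
  qed
  have "finite (f ` (?JS \<times> ?JS \<times> ?JS))" using finJS by simp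
  then have finM: "finite ?M" using Msub by (rule finite_subset[rotated])
  have neM: "?M \<noteq> {}" using EJ by blast
  have "mu3' V E ends \<in> ?M" unfolding mu3'_def by (rule Min_in[OF finM neM])
  then obtain J1 J2 J3 where J1: "is_join V E ends J1" and J2: "is_join V E ends J2"
      and J3: "is_join V E ends J3"
      and mu: "mu3' V E ends = real (card {e\<in>E. e \<notin> J1 \<and> e \<notin> J2 \<and> e \<notin> J3})
        + 3/2 * real (n_join V ends J1 + n_join V ends J2 + n_join V ends J3)"
    by blast
  have mb: "2 * (odd_comps V E ends J1 + odd_comps V E ends J2 + odd_comps V E ends J3)
     \<le> 4 * card {e\<in>E. e \<notin> J1 \<and> e \<notin> J2 \<and> e \<notin> J3}
        + 6 * (n_join V ends J1 + n_join V ends J2 + n_join V ends J3)"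
    by (rule main_bound[OF mg cub J1 J2 J3])
  have w1: "weak_oddness V E ends \<le> odd_comps V E ends J1" by (rule wo_le[OF J1])
  have w2: "weak_oddness V E ends \<le> odd_comps V E ends J2" by (rule wo_le[OF J2])
  have w3: "weak_oddness V E ends \<le> odd_comps V E ends J3" by (rule wo_le[OF J3])
  have "6 * weak_oddness V E ends \<le> 4 * card {e\<in>E. e \<notin> J1 \<and> e \<notin> J2 \<and> e \<notin> J3}
        + 6 * (n_join V ends J1 + n_join V ends J2 + n_join V ends J3)"
    using mb w1 w2 w3 by simp
  then have "real (6 * weak_oddness V E ends) \<le> real (4 * card {e\<in>E. e \<notin> J1 \<and> e \<notin> J2 \<and> e \<notin> J3}
        + 6 * (n_join V ends J1 + n_join V ends J2 + n_join V ends J3))"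
    by (rule of_nat_mono)
  then have r: "6 * real (weak_oddness V E ends) \<le> 4 * real (card {e\<in>E. e \<notin> J1 \<and> e \<notin> J2 \<and> e \<notin> J3})
        + 6 * real (n_join V ends J1 + n_join V ends J2 + n_join V ends J3)"
    by (simp only: of_nat_mult of_nat_add of_nat_numeral)
  show ?thesis unfolding mu by (rule fin_real[OF r])
qed

end
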